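(* Let $(G,\theta_G,(-1)^F_G)$ and $(H,\theta_H,(-1)^F_H)$ be fermionic groups. Equip the space $G\otimes H:=(G\times H)/\langle((-1)^F_G,(-1)^F_H)\rangle$, with elements written $g\otimes h$, with the following data: \begin{itemize} \item the product $(g_1\otimes h_1)(g_2\otimes h_2)=((-1)^F_G)^{\theta_G(g_2)\theta_H(h_1)}\,g_1g_2\otimes h_1h_2$; \item the element $1\otimes(-1)^F_H=(-1)^F_G\otimes 1$; \item the map $\theta(g\otimes h)=\theta_G(g)+\theta_H(h)$. \end{itemize} Then the product is well defined, and with these data $G\otimes H$ is a fermionic group.
   Context: A fermionic group is a topological group $G$ together with a central element $(-1)^F\in G$ with $((-1)^F)^2=1$ and a continuous homomorphism $\theta:G\to\mathbb{Z}_2=\{0,1\}$, written additively, satisfying $\theta((-1)^F)=0$. *)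

theory Defs
  imports "HOL-Analysis.Analysis" "HOL-Algebra.Group"
begin

definition topological_group :: "'a monoid \<Rightarrow> 'a topology \<Rightarrow> bool" where
  "topological_group G T \<longleftrightarrow> group G \<and> topspace T = carrier G \<and>
     continuous_map (prod_topology T T) T (\<lambda>(x, y). x \<otimes>\<^bsub>G\<^esub> y) \<and>
     continuous_map T T (\<lambda>x. inv\<^bsub>G\<^esub> x)"

definition fermionic_group :: "'a monoid \<Rightarrow> 'a topology \<Rightarrow> 'a \<Rightarrow> ('a \<Rightarrow> nat) \<Rightarrow> bool" where
  "fermionic_group G T f \<theta> \<longleftrightarrow> topological_group G T \<and>
     f \<in> carrier G \<and> (\<forall>x\<in>carrier G. f \<otimes>\<^bsub>G\<^esub> x = x \<otimes>\<^bsub>G\<^esub> f) \<and>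
     f \<otimes>\<^bsub>G\<^esub> f = \<one>\<^bsub>G\<^esub> \<and>
     (\<forall>x\<in>carrier G. \<theta> x \<in> {0, 1}) \<and>
     (\<forall>x\<in>carrier G. \<forall>y\<in>carrier G. \<theta> (x \<otimes>\<^bsub>G\<^esub> y) = (\<theta> x + \<theta> y) mod 2) \<and>
     continuous_map T (discrete_topology {0, 1}) \<theta> \<and>
     \<theta> f = 0"

definition quotient_topology :: "'a topology \<Rightarrow> ('a \<Rightarrow> 'b) \<Rightarrow> 'b set \<Rightarrow> 'b topology" where
  "quotient_topology T q Y = topology (\<lambda>U. U \<subseteq> Y \<and> openin T {x \<in> topspace T. q x \<in> U})"

definition tens_rel :: "'a monoid \<Rightarrow> 'b monoid \<Rightarrow> 'a \<Rightarrow> 'b \<Rightarrow> (('a \<times> 'b) \<times> ('a \<times> 'b)) set" where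
  "tens_rel G H fG fH = {(p, q). p \<in> carrier G \<times> carrier H \<and> q \<in> carrier G \<times> carrier H \<and>
      (q = p \<or> q = (fG \<otimes>\<^bsub>G\<^esub> fst p, fH \<otimes>\<^bsub>H\<^esub> snd p) \<or> p = (fG \<otimes>\<^bsub>G\<^esub> fst q, fH \<otimes>\<^bsub>H\<^esub> snd q))}"

definition tens_class :: "'a monoid \<Rightarrow> 'b monoid \<Rightarrow> 'a \<Rightarrow> 'b \<Rightarrow> 'a \<Rightarrow> 'b \<Rightarrow> ('a \<times> 'b) set" where
  "tens_class G H fG fH g h = tens_rel G H fG fH `` {(g, h)}"

definition tens_pmult :: "'a monoid \<Rightarrow> 'b monoid \<Rightarrow> 'a \<Rightarrow> ('a \<Rightarrow> nat) \<Rightarrow> ('b \<Rightarrow> nat)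
    \<Rightarrow> 'a \<times> 'b \<Rightarrow> 'a \<times> 'b \<Rightarrow> 'a \<times> 'b" where
  "tens_pmult G H fG \<theta>G \<theta>H p q =
     ((fG [^]\<^bsub>G\<^esub> (\<theta>G (fst q) * \<theta>H (snd p))) \<otimes>\<^bsub>G\<^esub> fst p \<otimes>\<^bsub>G\<^esub> fst q,
      snd p \<otimes>\<^bsub>H\<^esub> snd q)"

definition tens_group :: "'a monoid \<Rightarrow> 'b monoid \<Rightarrow> 'a \<Rightarrow> 'b \<Rightarrow> ('a \<Rightarrow> nat) \<Rightarrow> ('b \<Rightarrow> nat)
    \<Rightarrow> ('a \<times> 'b) set monoid" where
  "tens_group G H fG fH \<theta>G \<theta>H =
     \<lparr> carrier = (carrier G \<times> carrier H) // tens_rel G H fG fH,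
       mult = (\<lambda>X Y. \<Union>p\<in>X. \<Union>q\<in>Y. tens_rel G H fG fH `` {tens_pmult G H fG \<theta>G \<theta>H p q}),
       one = tens_class G H fG fH \<one>\<^bsub>G\<^esub> \<one>\<^bsub>H\<^esub> \<rparr>"

definition tens_topology :: "'a monoid \<Rightarrow> 'b monoid \<Rightarrow> 'a \<Rightarrow> 'b \<Rightarrow> 'a topology \<Rightarrow> 'b topology
    \<Rightarrow> ('a \<times> 'b) set topology" where
  "tens_topology G H fG fH TG TH =
     quotient_topology (prod_topology TG TH) (\<lambda>p. tens_rel G H fG fH `` {p})
       ((carrier G \<times> carrier H) // tens_rel G H fG fH)"

definition tens_theta :: "('a \<Rightarrow> nat) \<Rightarrow> ('b \<Rightarrow> nat) \<Rightarrow> ('a \<times> 'b) set \<Rightarrow> nat" where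
  "tens_theta \<theta>G \<theta>H X = (let p = (SOME p. p \<in> X) in (\<theta>G (fst p) + \<theta>H (snd p)) mod 2)"

end

theory Submission
  imports Defs
begin


definition dopen :: "'x topology \<Rightarrow> ('x \<Rightarrow> bool) \<Rightarrow> bool" where
  "dopen X P \<longleftrightarrow> openin X {x \<in> topspace X. P x} \<and> openin X {x \<in> topspace X. \<not> P x}"

lemma dopen_not: "dopen X P \<Longrightarrow> dopen X (\<lambda>x. \<not> P x)"
  by (simp add: dopen_def)

lemma dopen_conj:
  assumes a: "dopen X P" "dopen X Q"
  shows "dopen X (\<lambda>x. P x \<and> Q x)"
proof -
  have "{x \<in> topspace X. P x \<and> Q x} = {x \<in> topspace X. P x} \<inter> {x \<in> topspace X. Q x}" by auto
  moreover have "{x \<in> topspace X. \<not>(P x \<and> Q x)} = {x \<in> topspace X. \<not>P x} \<union> {x \<in> topspace X. \<not>Q x}" by auto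
  ultimately show ?thesis using a by (auto simp: dopen_def intro!: openin_Int openin_Un)
qed

lemma dopen_xor:
  assumes a: "dopen X P" "dopen X Q"
  shows "dopen X (\<lambda>x. P x \<noteq> Q x)"
proof -
  have e: "(\<lambda>x. P x \<noteq> Q x) = (\<lambda>x. \<not> (\<not> (P x \<and> \<not> Q x) \<and> \<not> (\<not> P x \<and> Q x)))" by auto
  show ?thesis unfolding e by (intro dopen_not dopen_conj a)
qed

lemma dopen_comp:
  assumes f: "continuous_map X Y f" and P: "dopen Y P"
  shows "dopen X (\<lambda>x. P (f x))"
proof -
  have im: "\<And>x. x \<in> topspace X \<Longrightarrow> f x \<in> topspace Y"
    using continuous_map_image_subset_topspace[OF f] by blast
  have e1: "{x \<in> topspace X. P (f x)} = {x \<in> topspace X. f x \<in> {y \<in> topspace Y. P y}}"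
    using im by auto
  have e2: "{x \<in> topspace X. \<not> P (f x)} = {x \<in> topspace X. f x \<in> {y \<in> topspace Y. \<not> P y}}"
    using im by auto
  show ?thesis unfolding dopen_def e1 e2
    using openin_continuous_map_preimage[OF f conjunct1[OF P[unfolded dopen_def]]]
      openin_continuous_map_preimage[OF f conjunct2[OF P[unfolded dopen_def]]] by blast
qed

lemma cont_if:
  assumes P: "dopen X P" and a: "a \<in> topspace Y" and b: "b \<in> topspace Y"
  shows "continuous_map X Y (\<lambda>x. if P x then a else b)"
  unfolding continuous_map
proof (intro conjI allI impI)
  show "(\<lambda>x. if P x then a else b) ` topspace X \<subseteq> topspace Y" using a b by auto
  fix U assume "openin Y U"
  have e: "{x \<in> topspace X. (if P x then a else b) \<in> U} =
     (if a \<in> U then {x \<in> topspace X. P x} else {}) \<union> (if b \<in> U then {x \<in> topspace X. \<not> P x} else {})"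
    by auto
  show "openin X {x \<in> topspace X. (if P x then a else b) \<in> U}"
    unfolding e using P by (auto simp: dopen_def intro!: openin_Un)
qed

lemma quot_open:
  "openin (quotient_topology T q Y) U \<longleftrightarrow> U \<subseteq> Y \<and> openin T {x \<in> topspace T. q x \<in> U}"
proof -
  let ?P = "\<lambda>U. U \<subseteq> Y \<and> openin T {x \<in> topspace T. q x \<in> U}"
  have i: "?P (S \<inter> S')" if a: "?P S" "?P S'" for S S'
  proof -
    have "{x \<in> topspace T. q x \<in> S \<inter> S'} = {x \<in> topspace T. q x \<in> S} \<inter> {x \<in> topspace T. q x \<in> S'}"
      by auto
    then show ?thesis using a by auto
  qed
  have u: "?P (\<Union>K)" if a: "\<forall>k\<in>K. ?P k" for K
  proof -
    have "{x \<in> topspace T. q x \<in> \<Union>K} = (\<Union>k\<in>K. {x \<in> topspace T. q x \<in> k})"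
      by auto
    then show ?thesis using a by auto
  qed
  have "istopology ?P" unfolding istopology_def
    apply (rule conjI)
     apply (intro allI impI)
     apply (erule (1) i)
    apply (intro allI impI)
    apply (erule u)
    done
  then show ?thesis unfolding quotient_topology_def by simp
qed

lemma quot_topspace:
  assumes "q ` topspace T \<subseteq> Y"
  shows "topspace (quotient_topology T q Y) = Y"
proof -
  have e: "{x \<in> topspace T. q x \<in> Y} = topspace T" using assms by auto
  have "openin (quotient_topology T q Y) Y"
    unfolding quot_open e by simp
  then have "Y \<subseteq> topspace (quotient_topology T q Y)" by (simp add: openin_subset)
  moreover have "topspace (quotient_topology T q Y) \<subseteq> Y"
    unfolding topspace_def quot_open by auto
  ultimately show ?thesis by auto
qed

lemma quot_cont_q:
  assumes "q ` topspace T \<subseteq> Y"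
  shows "continuous_map T (quotient_topology T q Y) q"
  unfolding continuous_map quot_topspace[OF assms] quot_open using assms by auto

lemma quot_univ:
  assumes qY: "q ` topspace T \<subseteq> Y" and FY: "F ` Y \<subseteq> topspace Z"
    and k: "continuous_map T Z k" and e: "\<And>x. x \<in> topspace T \<Longrightarrow> F (q x) = k x"
  shows "continuous_map (quotient_topology T q Y) Z F"
  unfolding continuous_map quot_topspace[OF qY]
proof (intro conjI allI impI)
  show "F ` Y \<subseteq> topspace Z" by fact
  fix U assume U: "openin Z U"
  have "{x \<in> topspace T. q x \<in> {y \<in> Y. F y \<in> U}} = {x \<in> topspace T. k x \<in> U}"
    using qY e by auto
  then show "openin (quotient_topology T q Y) {x \<in> Y. F x \<in> U}"
    unfolding quot_open using U k by (simp add: openin_continuous_map_preimage)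
qed




locale fg2 =
  fixes G :: "'a monoid" and H :: "'b monoid" and TG :: "'a topology" and TH :: "'b topology"
    and fG :: 'a and fH :: 'b and thG :: "'a \<Rightarrow> nat" and thH :: "'b \<Rightarrow> nat"
  assumes FG: "fermionic_group G TG fG thG" and FH: "fermionic_group H TH fH thH"
begin

sublocale G: group G using FG by (simp add: fermionic_group_def topological_group_def)
sublocale H: group H using FH by (simp add: fermionic_group_def topological_group_def)

lemma tsG: "topspace TG = carrier G" and tsH: "topspace TH = carrier H"
  using FG FH by (simp_all add: fermionic_group_def topological_group_def)

lemma multcG: "continuous_map (prod_topology TG TG) TG (\<lambda>(x, y). x \<otimes>\<^bsub>G\<^esub> y)"
  and invcG: "continuous_map TG TG (\<lambda>x. inv\<^bsub>G\<^esub> x)"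
  and multcH: "continuous_map (prod_topology TH TH) TH (\<lambda>(x, y). x \<otimes>\<^bsub>H\<^esub> y)"
  and invcH: "continuous_map TH TH (\<lambda>x. inv\<^bsub>H\<^esub> x)"
  using FG FH by (simp_all add: fermionic_group_def topological_group_def)

lemma fG: "fG \<in> carrier G" and fH: "fH \<in> carrier H"
  and fGc: "x \<in> carrier G \<Longrightarrow> fG \<otimes>\<^bsub>G\<^esub> x = x \<otimes>\<^bsub>G\<^esub> fG"
  and fHc: "y \<in> carrier H \<Longrightarrow> fH \<otimes>\<^bsub>H\<^esub> y = y \<otimes>\<^bsub>H\<^esub> fH"
  and fG2: "fG \<otimes>\<^bsub>G\<^esub> fG = \<one>\<^bsub>G\<^esub>" and fH2: "fH \<otimes>\<^bsub>H\<^esub> fH = \<one>\<^bsub>H\<^esub>"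
  and thG01: "x \<in> carrier G \<Longrightarrow> thG x = 0 \<or> thG x = 1"
  and thH01: "y \<in> carrier H \<Longrightarrow> thH y = 0 \<or> thH y = 1"
  and thGm: "x \<in> carrier G \<Longrightarrow> x' \<in> carrier G \<Longrightarrow> thG (x \<otimes>\<^bsub>G\<^esub> x') = (thG x + thG x') mod 2"
  and thHm: "y \<in> carrier H \<Longrightarrow> y' \<in> carrier H \<Longrightarrow> thH (y \<otimes>\<^bsub>H\<^esub> y') = (thH y + thH y') mod 2"
  and thGc: "continuous_map TG (discrete_topology {0, 1}) thG"
  and thHc: "continuous_map TH (discrete_topology {0, 1}) thH"
  and thGf: "thG fG = 0" and thHf: "thH fH = 0"
  using FG FH by (simp_all add: fermionic_group_def)

lemma thG1: "thG \<one>\<^bsub>G\<^esub> = 0"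
  using thGm[of "\<one>\<^bsub>G\<^esub>" "\<one>\<^bsub>G\<^esub>"] thG01[of "\<one>\<^bsub>G\<^esub>"] by auto
lemma thH1: "thH \<one>\<^bsub>H\<^esub> = 0"
  using thHm[of "\<one>\<^bsub>H\<^esub>" "\<one>\<^bsub>H\<^esub>"] thH01[of "\<one>\<^bsub>H\<^esub>"] by auto

lemma thGb: "x \<in> carrier G \<Longrightarrow> thG x \<noteq> 1 \<longleftrightarrow> thG x = 0"
  using thG01 by fastforce
lemma thHb: "y \<in> carrier H \<Longrightarrow> thH y \<noteq> 1 \<longleftrightarrow> thH y = 0"
  using thH01 by fastforce

lemma thGm1: "x \<in> carrier G \<Longrightarrow> x' \<in> carrier G \<Longrightarrow> thG (x \<otimes>\<^bsub>G\<^esub> x') = 1 \<longleftrightarrow> (thG x = 1) \<noteq> (thG x' = 1)"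
  using thGm[of x x'] thG01[of x] thG01[of x'] by auto
lemma thHm1: "y \<in> carrier H \<Longrightarrow> y' \<in> carrier H \<Longrightarrow> thH (y \<otimes>\<^bsub>H\<^esub> y') = 1 \<longleftrightarrow> (thH y = 1) \<noteq> (thH y' = 1)"
  using thHm[of y y'] thH01[of y] thH01[of y'] by auto

lemma thGinv: "x \<in> carrier G \<Longrightarrow> thG (inv\<^bsub>G\<^esub> x) = thG x"
  using thGm[of "inv\<^bsub>G\<^esub> x" x] thG01[of x] thG01[of "inv\<^bsub>G\<^esub> x"] thG1 by auto
lemma thHinv: "y \<in> carrier H \<Longrightarrow> thH (inv\<^bsub>H\<^esub> y) = thH y"
  using thHm[of "inv\<^bsub>H\<^esub> y" y] thH01[of y] thH01[of "inv\<^bsub>H\<^esub> y"] thH1 by auto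

lemma thGf1: "x \<in> carrier G \<Longrightarrow> thG (fG \<otimes>\<^bsub>G\<^esub> x) = thG x"
  using thGm[of fG x] thG01[of x] thGf fG by auto
lemma thHf1: "y \<in> carrier H \<Longrightarrow> thH (fH \<otimes>\<^bsub>H\<^esub> y) = thH y"
  using thHm[of fH y] thH01[of y] thHf fH by auto

definition sg :: "bool \<Rightarrow> 'a" where "sg b = (if b then fG else \<one>\<^bsub>G\<^esub>)"

lemma sg_closed [simp]: "sg b \<in> carrier G" using fG by (simp add: sg_def)
lemma sg_False [simp]: "sg False = \<one>\<^bsub>G\<^esub>" by (simp add: sg_def)
lemma sg_True: "sg True = fG" by (simp add: sg_def)
lemma sg_comm: "x \<in> carrier G \<Longrightarrow> sg b \<otimes>\<^bsub>G\<^esub> x = x \<otimes>\<^bsub>G\<^esub> sg b"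
  using fGc by (simp add: sg_def)
lemma sg_sg: "sg a \<otimes>\<^bsub>G\<^esub> sg b = sg (a \<noteq> b)"
  using fG fG2 by (simp add: sg_def)
lemma sg_left: "x \<in> carrier G \<Longrightarrow> y \<in> carrier G \<Longrightarrow> x \<otimes>\<^bsub>G\<^esub> (sg b \<otimes>\<^bsub>G\<^esub> y) = sg b \<otimes>\<^bsub>G\<^esub> (x \<otimes>\<^bsub>G\<^esub> y)"
  by (metis G.m_assoc sg_closed sg_comm)
lemma sg_sg2: "y \<in> carrier G \<Longrightarrow> sg a \<otimes>\<^bsub>G\<^esub> (sg b \<otimes>\<^bsub>G\<^esub> y) = sg (a \<noteq> b) \<otimes>\<^bsub>G\<^esub> y"
  by (metis G.m_assoc sg_closed sg_sg)
lemma thGsg: "x \<in> carrier G \<Longrightarrow> thG (sg b \<otimes>\<^bsub>G\<^esub> x) = thG x"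
  using thGf1 by (simp add: sg_def)

lemma fpow: "fG [^]\<^bsub>G\<^esub> (n::nat) = sg (odd n)"
proof (induction n)
  case 0 then show ?case by simp
next
  case (Suc n)
  then show ?case using fG fG2 by (simp add: sg_def)
qed

abbreviation "S \<equiv> carrier G \<times> carrier H"
abbreviation "R \<equiv> tens_rel G H fG fH"
abbreviation "cls p \<equiv> R `` {p}"
abbreviation "pm \<equiv> tens_pmult G H fG thG thH"
definition sig :: "'a \<times> 'b \<Rightarrow> 'a \<times> 'b" where
  "sig p = (fG \<otimes>\<^bsub>G\<^esub> fst p, fH \<otimes>\<^bsub>H\<^esub> snd p)"

lemma sig_closed: "p \<in> S \<Longrightarrow> sig p \<in> S"
  using fG fH by (auto simp: sig_def)
lemma sig_sig: "p \<in> S \<Longrightarrow> sig (sig p) = p"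
  using fG fH fG2 fH2 by (auto simp: sig_def G.m_assoc[symmetric] H.m_assoc[symmetric])

lemma cls_eq: "p \<in> S \<Longrightarrow> cls p = {p, sig p}"
proof -
  assume p: "p \<in> S"
  have "(p, q) \<in> R \<longleftrightarrow> q = p \<or> q = sig p" for q
  proof
    assume "(p, q) \<in> R"
    then have "q \<in> S" "q = p \<or> q = sig p \<or> p = sig q"
      unfolding tens_rel_def sig_def by auto
    then show "q = p \<or> q = sig p" using sig_sig by auto
  next
    assume "q = p \<or> q = sig p"
    then show "(p, q) \<in> R" using p sig_closed[OF p] unfolding tens_rel_def sig_def by auto
  qed
  then show ?thesis by auto
qed

lemma cls_sig: "p \<in> S \<Longrightarrow> cls (sig p) = cls p"
  using cls_eq sig_closed sig_sig by auto

lemma cls_eq_iff: "p \<in> S \<Longrightarrow> q \<in> S \<Longrightarrow> cls p = cls q \<longleftrightarrow> q = p \<or> q = sig p"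
proof
  assume "p \<in> S" "q \<in> S" "cls p = cls q"
  then have "q \<in> cls p" using cls_eq by auto
  then show "q = p \<or> q = sig p" using cls_eq \<open>p \<in> S\<close> by auto
next
  assume "p \<in> S" "q \<in> S" "q = p \<or> q = sig p"
  then show "cls p = cls q" using cls_sig[of p] by metis
qed

lemma pm_eq: "p \<in> S \<Longrightarrow> q \<in> S \<Longrightarrow> pm p q =
   (sg (thG (fst q) = 1 \<and> thH (snd p) = 1) \<otimes>\<^bsub>G\<^esub> fst p \<otimes>\<^bsub>G\<^esub> fst q, snd p \<otimes>\<^bsub>H\<^esub> snd q)"
proof -
  assume p: "p \<in> S" and q: "q \<in> S"
  have "odd (thG (fst q) * thH (snd p)) \<longleftrightarrow> (thG (fst q) = 1 \<and> thH (snd p) = 1)"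
    using thG01[of "fst q"] thH01[of "snd p"] p q by auto
  then show ?thesis unfolding tens_pmult_def fpow by simp
qed

lemma pm_closed: "p \<in> S \<Longrightarrow> q \<in> S \<Longrightarrow> pm p q \<in> S"
  by (auto simp: pm_eq)

lemma pm_sig_l: "p \<in> S \<Longrightarrow> q \<in> S \<Longrightarrow> pm (sig p) q = sig (pm p q)"
  using fG fH
  by (auto simp: pm_eq sig_closed sig_def thHf1 G.m_assoc H.m_assoc sg_left)

lemma pm_sig_r: "p \<in> S \<Longrightarrow> q \<in> S \<Longrightarrow> pm p (sig q) = sig (pm p q)"
proof -
  assume p: "p \<in> S" and q: "q \<in> S"
  have "fst p \<otimes>\<^bsub>G\<^esub> (fG \<otimes>\<^bsub>G\<^esub> fst q) = fG \<otimes>\<^bsub>G\<^esub> (fst p \<otimes>\<^bsub>G\<^esub> fst q)"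
    using p q fG fGc by (metis G.m_assoc mem_Sigma_iff prod.collapse)
  moreover have "snd p \<otimes>\<^bsub>H\<^esub> (fH \<otimes>\<^bsub>H\<^esub> snd q) = fH \<otimes>\<^bsub>H\<^esub> (snd p \<otimes>\<^bsub>H\<^esub> snd q)"
    using p q fH fHc by (metis H.m_assoc mem_Sigma_iff prod.collapse)
  ultimately show ?thesis using p q fG fH
    by (auto simp: pm_eq sig_closed sig_def thGf1 G.m_assoc sg_left)
qed

lemma cls_pm_wd:
  assumes "p \<in> S" "p' \<in> S" "q \<in> S" "q' \<in> S" "cls p = cls p'" "cls q = cls q'"
  shows "cls (pm p q) = cls (pm p' q')"
proof -
  have "p' = p \<or> p' = sig p" "q' = q \<or> q' = sig q" using assms cls_eq_iff by auto
  have a: "cls (pm p' q') = cls (pm p q')"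
    using \<open>p' = p \<or> p' = sig p\<close> assms(1,4) pm_sig_l[of p q'] cls_sig[OF pm_closed[of p q']]
    by metis
  have b: "cls (pm p q') = cls (pm p q)"
    using \<open>q' = q \<or> q' = sig q\<close> assms(1,3) pm_sig_r[of p q] cls_sig[OF pm_closed[of p q]]
    by metis
  show ?thesis using a b by simp
qed

end



context fg2
begin

abbreviation "Q \<equiv> tens_group G H fG fH thG thH"

lemma carrier_Q: "carrier Q = S // R" by (simp add: tens_group_def)
lemma one_Q: "\<one>\<^bsub>Q\<^esub> = cls (\<one>\<^bsub>G\<^esub>, \<one>\<^bsub>H\<^esub>)" by (simp add: tens_group_def tens_class_def)

lemma mult_cls:
  assumes p: "p \<in> S" and q: "q \<in> S"
  shows "cls p \<otimes>\<^bsub>Q\<^esub> cls q = cls (pm p q)"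
proof -
  have k: "cls (pm a b) = cls (pm p q)" if a: "a \<in> cls p" and b: "b \<in> cls q" for a b
  proof -
    have aS: "a \<in> S" and bS: "b \<in> S" using a b cls_eq p q sig_closed by auto
    have "cls p = cls a" "cls q = cls b"
      using a b cls_eq_iff[OF p aS] cls_eq_iff[OF q bS] cls_eq[OF p] cls_eq[OF q] by auto
    then show ?thesis using cls_pm_wd aS bS p q by metis
  qed
  have pq: "p \<in> cls p" "q \<in> cls q" using cls_eq p q by auto
  have "(\<Union>a\<in>cls p. \<Union>b\<in>cls q. cls (pm a b)) = cls (pm p q)"
  proof
    show "(\<Union>a\<in>cls p. \<Union>b\<in>cls q. cls (pm a b)) \<subseteq> cls (pm p q)" using k by blast
    show "cls (pm p q) \<subseteq> (\<Union>a\<in>cls p. \<Union>b\<in>cls q. cls (pm a b))" using pq by blast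
  qed
  then show ?thesis by (simp add: tens_group_def)
qed

lemma sg_cong: "(A \<longleftrightarrow> B) \<Longrightarrow> sg A \<otimes>\<^bsub>G\<^esub> x = sg B \<otimes>\<^bsub>G\<^esub> x" by simp

lemma pm_assoc0:
  assumes a: "a \<in> carrier G" and b: "b \<in> carrier H" and c: "c \<in> carrier G"
    and d: "d \<in> carrier H" and e: "e \<in> carrier G" and f: "f \<in> carrier H"
  shows "pm (pm (a, b) (c, d)) (e, f) = pm (a, b) (pm (c, d) (e, f))"
proof -
  define X where "X = (thG e = 1 \<and> (thH b = 1) \<noteq> (thH d = 1))"
  define Y where "Y = (thG c = 1 \<and> thH b = 1)"
  define W where "W = (thG e = 1 \<and> thH d = 1)"
  define Z where "Z = ((thG c = 1) \<noteq> (thG e = 1) \<and> thH b = 1)"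
  have cd: "(c, d) \<in> S" and ab: "(a, b) \<in> S" and ef: "(e, f) \<in> S" using assms by auto
  have L: "pm (pm (a, b) (c, d)) (e, f) = (sg X \<otimes>\<^bsub>G\<^esub> (sg Y \<otimes>\<^bsub>G\<^esub> a \<otimes>\<^bsub>G\<^esub> c) \<otimes>\<^bsub>G\<^esub> e, b \<otimes>\<^bsub>H\<^esub> d \<otimes>\<^bsub>H\<^esub> f)"
    using assms thHm1[OF b d] by (simp add: pm_eq pm_closed X_def Y_def)
  have R: "pm (a, b) (pm (c, d) (e, f)) = (sg Z \<otimes>\<^bsub>G\<^esub> a \<otimes>\<^bsub>G\<^esub> (sg W \<otimes>\<^bsub>G\<^esub> c \<otimes>\<^bsub>G\<^esub> e), b \<otimes>\<^bsub>H\<^esub> (d \<otimes>\<^bsub>H\<^esub> f))"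
    using assms thGm1[OF c e] by (simp add: pm_eq pm_closed Z_def W_def G.m_assoc thGsg)
  have L1: "sg X \<otimes>\<^bsub>G\<^esub> (sg Y \<otimes>\<^bsub>G\<^esub> a \<otimes>\<^bsub>G\<^esub> c) \<otimes>\<^bsub>G\<^esub> e = sg (X \<noteq> Y) \<otimes>\<^bsub>G\<^esub> (a \<otimes>\<^bsub>G\<^esub> (c \<otimes>\<^bsub>G\<^esub> e))"
    using assms by (simp add: G.m_assoc sg_sg2)
  have R1: "sg Z \<otimes>\<^bsub>G\<^esub> a \<otimes>\<^bsub>G\<^esub> (sg W \<otimes>\<^bsub>G\<^esub> c \<otimes>\<^bsub>G\<^esub> e) = sg (Z \<noteq> W) \<otimes>\<^bsub>G\<^esub> (a \<otimes>\<^bsub>G\<^esub> (c \<otimes>\<^bsub>G\<^esub> e))"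
    using assms by (simp add: G.m_assoc sg_sg2 sg_left[of a])
  have B: "(X \<noteq> Y) = (Z \<noteq> W)" unfolding X_def Y_def Z_def W_def by auto
  show ?thesis unfolding L R L1 R1 B using assms by (simp add: H.m_assoc)
qed

lemma pm_assoc: "p \<in> S \<Longrightarrow> q \<in> S \<Longrightarrow> r \<in> S \<Longrightarrow> pm (pm p q) r = pm p (pm q r)"
  using pm_assoc0[of "fst p" "snd p" "fst q" "snd q" "fst r" "snd r"] by auto

lemma pm_one: "q \<in> S \<Longrightarrow> pm (\<one>\<^bsub>G\<^esub>, \<one>\<^bsub>H\<^esub>) q = q"
  by (auto simp: pm_eq thH1)

definition iv :: "'a \<times> 'b \<Rightarrow> 'a \<times> 'b" where
  "iv p = (sg (thG (fst p) = 1 \<and> thH (snd p) = 1) \<otimes>\<^bsub>G\<^esub> inv\<^bsub>G\<^esub> fst p, inv\<^bsub>H\<^esub> snd p)"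

lemma iv_closed: "p \<in> S \<Longrightarrow> iv p \<in> S"
  by (auto simp: iv_def)

lemma pm_iv: "p \<in> S \<Longrightarrow> pm (iv p) p = (\<one>\<^bsub>G\<^esub>, \<one>\<^bsub>H\<^esub>)"
  by (auto simp: pm_eq iv_closed iv_def thHinv G.m_assoc sg_sg)

lemma carQE:
  assumes "X \<in> carrier Q" obtains p where "X = cls p" "p \<in> S"
  using assms unfolding carrier_Q by (rule quotientE)

lemma cls_carQ: "p \<in> S \<Longrightarrow> cls p \<in> carrier Q"
  unfolding carrier_Q by (rule quotientI)

lemma grpQ: "group Q"
proof (rule groupI)
  fix X Y assume XY: "X \<in> carrier Q" "Y \<in> carrier Q"
  obtain p where "X = cls p" "p \<in> S" using XY(1) by (rule carQE)
  moreover obtain q where "Y = cls q" "q \<in> S" using XY(2) by (rule carQE)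
  ultimately show "X \<otimes>\<^bsub>Q\<^esub> Y \<in> carrier Q"
    by (simp add: mult_cls pm_closed cls_carQ)
next
  show "\<one>\<^bsub>Q\<^esub> \<in> carrier Q" unfolding one_Q by (rule cls_carQ) simp
next
  fix X Y Z assume XYZ: "X \<in> carrier Q" "Y \<in> carrier Q" "Z \<in> carrier Q"
  obtain p where "X = cls p" "p \<in> S" using XYZ(1) by (rule carQE)
  moreover obtain q where "Y = cls q" "q \<in> S" using XYZ(2) by (rule carQE)
  moreover obtain r where "Z = cls r" "r \<in> S" using XYZ(3) by (rule carQE)
  ultimately show "X \<otimes>\<^bsub>Q\<^esub> Y \<otimes>\<^bsub>Q\<^esub> Z = X \<otimes>\<^bsub>Q\<^esub> (Y \<otimes>\<^bsub>Q\<^esub> Z)"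
    by (simp add: mult_cls pm_closed pm_assoc)
next
  fix X assume "X \<in> carrier Q"
  then obtain p where "X = cls p" "p \<in> S" by (rule carQE)
  then show "\<one>\<^bsub>Q\<^esub> \<otimes>\<^bsub>Q\<^esub> X = X"
    by (simp add: one_Q mult_cls pm_one)
next
  fix X assume "X \<in> carrier Q"
  then obtain p where p: "X = cls p" "p \<in> S" by (rule carQE)
  then have "cls (iv p) \<in> carrier Q" "cls (iv p) \<otimes>\<^bsub>Q\<^esub> X = \<one>\<^bsub>Q\<^esub>"
    by (simp_all add: cls_carQ iv_closed mult_cls pm_iv one_Q)
  then show "\<exists>Y\<in>carrier Q. Y \<otimes>\<^bsub>Q\<^esub> X = \<one>\<^bsub>Q\<^esub>" by blast
qed

lemma inv_cls: "p \<in> S \<Longrightarrow> inv\<^bsub>Q\<^esub> (cls p) = cls (iv p)"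
  using group.inv_equality[OF grpQ, of "cls (iv p)" "cls p"]
  by (simp add: mult_cls iv_closed pm_iv one_Q cls_carQ)

end



context fg2
begin

abbreviation "T \<equiv> prod_topology TG TH"
abbreviation "QT \<equiv> tens_topology G H fG fH TG TH"

lemma tsT: "topspace T = S" by (simp add: tsG tsH)
lemma QT_def': "QT = quotient_topology T cls (S // R)" unfolding tens_topology_def ..
lemma clsY: "cls ` topspace T \<subseteq> S // R"
proof
  fix X assume "X \<in> cls ` topspace T"
  then obtain p where "p \<in> S" "X = cls p" unfolding tsT by blast
  then show "X \<in> S // R" by (simp add: quotientI)
qed
lemma tsQT: "topspace QT = carrier Q" unfolding QT_def' quot_topspace[OF clsY] carrier_Q ..
lemma openQT: "openin QT U \<longleftrightarrow> U \<subseteq> S // R \<and> openin T {x \<in> topspace T. cls x \<in> U}"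
  unfolding QT_def' quot_open ..
lemma cls_cont: "continuous_map T QT cls" unfolding QT_def' by (rule quot_cont_q[OF clsY])

lemma contmulG:
  assumes f: "continuous_map X TG f" and g: "continuous_map X TG g"
  shows "continuous_map X TG (\<lambda>x. f x \<otimes>\<^bsub>G\<^esub> g x)"
proof -
  have "continuous_map X (prod_topology TG TG) (\<lambda>x. (f x, g x))"
    using f g by (rule continuous_map_pairedI)
  from continuous_map_compose[OF this multcG] show ?thesis by (simp add: o_def)
qed

lemma contmulH:
  assumes f: "continuous_map X TH f" and g: "continuous_map X TH g"
  shows "continuous_map X TH (\<lambda>x. f x \<otimes>\<^bsub>H\<^esub> g x)"
proof -
  have "continuous_map X (prod_topology TH TH) (\<lambda>x. (f x, g x))"
    using f g by (rule continuous_map_pairedI)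
  from continuous_map_compose[OF this multcH] show ?thesis by (simp add: o_def)
qed

lemma continvG: "continuous_map X TG f \<Longrightarrow> continuous_map X TG (\<lambda>x. inv\<^bsub>G\<^esub> (f x))"
  using continuous_map_compose[OF _ invcG] by (simp add: o_def)
lemma continvH: "continuous_map X TH f \<Longrightarrow> continuous_map X TH (\<lambda>x. inv\<^bsub>H\<^esub> (f x))"
  using continuous_map_compose[OF _ invcH] by (simp add: o_def)

lemma constG: "continuous_map X TG (\<lambda>x. fG)" by (simp add: tsG fG)
lemma constH: "continuous_map X TH (\<lambda>x. fH)" by (simp add: tsH fH)

lemma sig_cont: "continuous_map T T sig"
  unfolding sig_def
  by (intro continuous_map_pairedI contmulG contmulH continuous_map_fst continuous_map_snd constG constH)

lemma cls_open:
  assumes V: "openin T V"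
  shows "openin QT (cls ` V)"
proof -
  have VS: "V \<subseteq> S" using openin_subset[OF V] tsT by simp
  have e: "{x \<in> topspace T. cls x \<in> cls ` V} = V \<union> {x \<in> topspace T. sig x \<in> V}"
  proof (rule Set.set_eqI)
    fix x
    show "x \<in> {x \<in> topspace T. cls x \<in> cls ` V} \<longleftrightarrow> x \<in> V \<union> {x \<in> topspace T. sig x \<in> V}"
    proof
      assume a: "x \<in> {x \<in> topspace T. cls x \<in> cls ` V}"
      have x: "x \<in> S" using a tsT by simp
      have "cls x \<in> cls ` V" using a by simp
      then obtain v where v: "v \<in> V" "cls x = cls v" by (rule imageE) simp
      have vS: "v \<in> S" using VS v(1) by (rule subsetD)
      have "v = x \<or> v = sig x" by (rule iffD1[OF cls_eq_iff[OF x vS] v(2)])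
      then show "x \<in> V \<union> {x \<in> topspace T. sig x \<in> V}"
      proof
        assume "v = x" then show ?thesis using v(1) by simp
      next
        assume "v = sig x" then show ?thesis using v(1) x tsT by simp
      qed
    next
      assume a: "x \<in> V \<union> {x \<in> topspace T. sig x \<in> V}"
      have x: "x \<in> S"
      proof (cases "x \<in> V")
        case True then show ?thesis using VS by (rule subsetD[rotated])
      next
        case False then show ?thesis using a tsT by simp
      qed
      have "cls x \<in> cls ` V"
      proof (cases "x \<in> V")
        case True then show ?thesis by (rule imageI)
      next
        case False
        then have "sig x \<in> V" using a by simp
        then have "cls (sig x) \<in> cls ` V" by (rule imageI)
        then show ?thesis using cls_sig[OF x] by simp
      qed
      then show "x \<in> {x \<in> topspace T. cls x \<in> cls ` V}" using x tsT by simp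
    qed
  qed
  have "cls ` V \<subseteq> cls ` topspace T" using VS tsT by (simp add: image_mono)
  then have "cls ` V \<subseteq> S // R" using clsY by (rule order_trans)
  moreover have "openin T (V \<union> {x \<in> topspace T. sig x \<in> V})"
    using V openin_continuous_map_preimage[OF sig_cont V] by (rule openin_Un)
  ultimately show ?thesis unfolding openQT e by simp
qed

lemma dG: "dopen TG (\<lambda>x. thG x = 1)"
proof -
  have "{x \<in> topspace TG. thG x = 1} = {x \<in> topspace TG. thG x \<in> {1}}" by auto
  moreover have "{x \<in> topspace TG. thG x \<noteq> 1} = {x \<in> topspace TG. thG x \<in> {0}}"
    using thGb tsG by auto
  ultimately show ?thesis unfolding dopen_def
    using openin_continuous_map_preimage[OF thGc, of "{1}"] openin_continuous_map_preimage[OF thGc, of "{0}"]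
    by simp
qed

lemma dH: "dopen TH (\<lambda>x. thH x = 1)"
proof -
  have "{x \<in> topspace TH. thH x = 1} = {x \<in> topspace TH. thH x \<in> {1}}" by auto
  moreover have "{x \<in> topspace TH. thH x \<noteq> 1} = {x \<in> topspace TH. thH x \<in> {0}}"
    using thHb tsH by auto
  ultimately show ?thesis unfolding dopen_def
    using openin_continuous_map_preimage[OF thHc, of "{1}"] openin_continuous_map_preimage[OF thHc, of "{0}"]
    by simp
qed

lemma pm_cont: "continuous_map (prod_topology T T) T (\<lambda>z. pm (fst z) (snd z))"
proof -
  let ?X = "prod_topology T T"
  have c1: "continuous_map ?X TG (\<lambda>z. fst (fst z))"
    by (rule continuous_map_compose[OF continuous_map_fst continuous_map_fst, unfolded o_def])
  have c2: "continuous_map ?X TH (\<lambda>z. snd (fst z))"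
    by (rule continuous_map_compose[OF continuous_map_fst continuous_map_snd, unfolded o_def])
  have c3: "continuous_map ?X TG (\<lambda>z. fst (snd z))"
    by (rule continuous_map_compose[OF continuous_map_snd continuous_map_fst, unfolded o_def])
  have c4: "continuous_map ?X TH (\<lambda>z. snd (snd z))"
    by (rule continuous_map_compose[OF continuous_map_snd continuous_map_snd, unfolded o_def])
  have d: "dopen ?X (\<lambda>z. thG (fst (snd z)) = 1 \<and> thH (snd (fst z)) = 1)"
    by (intro dopen_conj dopen_comp[OF c3 dG] dopen_comp[OF c2 dH])
  have s: "continuous_map ?X TG (\<lambda>z. sg (thG (fst (snd z)) = 1 \<and> thH (snd (fst z)) = 1))"
    unfolding sg_def by (rule cont_if[OF d]) (simp_all add: tsG fG)
  have "continuous_map ?X T (\<lambda>z. (sg (thG (fst (snd z)) = 1 \<and> thH (snd (fst z)) = 1)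
      \<otimes>\<^bsub>G\<^esub> fst (fst z) \<otimes>\<^bsub>G\<^esub> fst (snd z), snd (fst z) \<otimes>\<^bsub>H\<^esub> snd (snd z)))"
    by (intro continuous_map_pairedI contmulG contmulH s c1 c2 c3 c4)
  then show ?thesis
  proof (rule continuous_map_eq)
    fix z assume "z \<in> topspace ?X"
    then have "fst z \<in> S" "snd z \<in> S" using tsT by auto
    then show "(sg (thG (fst (snd z)) = 1 \<and> thH (snd (fst z)) = 1)
      \<otimes>\<^bsub>G\<^esub> fst (fst z) \<otimes>\<^bsub>G\<^esub> fst (snd z), snd (fst z) \<otimes>\<^bsub>H\<^esub> snd (snd z)) = pm (fst z) (snd z)"
      by (simp add: pm_eq)
  qed
qed

lemma iv_cont: "continuous_map T T iv"
proof -
  have d: "dopen T (\<lambda>z. thG (fst z) = 1 \<and> thH (snd z) = 1)"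
    by (intro dopen_conj dopen_comp[OF continuous_map_fst dG] dopen_comp[OF continuous_map_snd dH])
  have s: "continuous_map T TG (\<lambda>z. sg (thG (fst z) = 1 \<and> thH (snd z) = 1))"
    unfolding sg_def by (rule cont_if[OF d]) (simp_all add: tsG fG)
  show ?thesis unfolding iv_def
    by (intro continuous_map_pairedI contmulG s continvG continvH continuous_map_fst continuous_map_snd)
qed

lemma multQ_cont: "continuous_map (prod_topology QT QT) QT (\<lambda>(X, Y). X \<otimes>\<^bsub>Q\<^esub> Y)"
  unfolding continuous_map
proof (intro conjI allI impI)
  show "(\<lambda>(X, Y). X \<otimes>\<^bsub>Q\<^esub> Y) ` topspace (prod_topology QT QT) \<subseteq> topspace QT"
    using monoid.m_closed[OF group.is_monoid[OF grpQ]] by (auto simp: tsQT)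
  fix U assume U: "openin QT U"
  have UT: "openin T {x \<in> topspace T. cls x \<in> U}" using U openQT by blast
  show "openin (prod_topology QT QT)
     {z \<in> topspace (prod_topology QT QT). (case z of (X, Y) \<Rightarrow> X \<otimes>\<^bsub>Q\<^esub> Y) \<in> U}"
    unfolding openin_prod_topology_alt
  proof (intro allI impI)
    fix X Y assume "(X, Y) \<in> {z \<in> topspace (prod_topology QT QT). (case z of (X, Y) \<Rightarrow> X \<otimes>\<^bsub>Q\<^esub> Y) \<in> U}"
    then have XY: "X \<in> carrier Q" "Y \<in> carrier Q" "X \<otimes>\<^bsub>Q\<^esub> Y \<in> U" by (auto simp: tsQT)
    obtain p where p: "X = cls p" "p \<in> S" using XY(1) by (rule carQE)
    obtain q where q: "Y = cls q" "q \<in> S" using XY(2) by (rule carQE)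
    let ?O = "{z \<in> topspace (prod_topology T T). pm (fst z) (snd z) \<in> {x \<in> topspace T. cls x \<in> U}}"
    have o: "openin (prod_topology T T) ?O"
      by (rule openin_continuous_map_preimage[OF pm_cont UT])
    have pO: "(p, q) \<in> ?O" using p q XY(3) mult_cls pm_closed tsT by auto
    have "\<exists>A B. openin T A \<and> openin T B \<and> p \<in> A \<and> q \<in> B \<and> A \<times> B \<subseteq> ?O"
      using o pO unfolding openin_prod_topology_alt by blast
    then obtain A B where AB: "openin T A" "openin T B" "p \<in> A" "q \<in> B" "A \<times> B \<subseteq> ?O"
      by blast
    show "\<exists>U' V'. openin QT U' \<and> openin QT V' \<and> X \<in> U' \<and> Y \<in> V' \<and>
        U' \<times> V' \<subseteq> {z \<in> topspace (prod_topology QT QT). (case z of (X, Y) \<Rightarrow> X \<otimes>\<^bsub>Q\<^esub> Y) \<in> U}"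
    proof (intro exI conjI)
      show "openin QT (cls ` A)" using AB(1) by (rule cls_open)
      show "openin QT (cls ` B)" using AB(2) by (rule cls_open)
      show "X \<in> cls ` A" using p AB(3) by blast
      show "Y \<in> cls ` B" using q AB(4) by blast
      show "cls ` A \<times> cls ` B \<subseteq> {z \<in> topspace (prod_topology QT QT). (case z of (X, Y) \<Rightarrow> X \<otimes>\<^bsub>Q\<^esub> Y) \<in> U}"
      proof (rule subsetI)
        fix z assume "z \<in> cls ` A \<times> cls ` B"
        then obtain a b where ab: "a \<in> A" "b \<in> B" "z = (cls a, cls b)" by blast
        have "(a, b) \<in> ?O" using AB(5) ab by blast
        then have "a \<in> S" "b \<in> S" "cls (pm a b) \<in> U" using tsT by auto
        then show "z \<in> {z \<in> topspace (prod_topology QT QT). (case z of (X, Y) \<Rightarrow> X \<otimes>\<^bsub>Q\<^esub> Y) \<in> U}"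
          using ab(3) by (simp add: mult_cls cls_carQ tsQT)
      qed
    qed
  qed
qed

lemma invQ_cont: "continuous_map QT QT (\<lambda>X. inv\<^bsub>Q\<^esub> X)"
  unfolding QT_def'
proof (rule quot_univ[OF clsY, where k = "cls \<circ> iv"])
  show "(\<lambda>X. inv\<^bsub>Q\<^esub> X) ` (S // R) \<subseteq> topspace (quotient_topology T cls (S // R))"
    unfolding quot_topspace[OF clsY] using group.inv_closed[OF grpQ] carrier_Q by auto
  show "continuous_map T (quotient_topology T cls (S // R)) (cls \<circ> iv)"
    using continuous_map_compose[OF iv_cont cls_cont] QT_def' by simp
  fix x assume "x \<in> topspace T"
  then show "inv\<^bsub>Q\<^esub> (cls x) = (cls \<circ> iv) x" using inv_cls tsT by simp
qed

abbreviation "th \<equiv> tens_theta thG thH"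

lemma th_cls:
  assumes p: "p \<in> S"
  shows "th (cls p) = (thG (fst p) + thH (snd p)) mod 2"
proof -
  let ?a = "SOME a. a \<in> cls p"
  have "?a \<in> cls p" using cls_eq[OF p] by (metis insertI1 someI)
  then have disj: "?a = p \<or> ?a = sig p" using cls_eq[OF p] by auto
  have eqs: "thG (fst (sig p)) = thG (fst p)" "thH (snd (sig p)) = thH (snd p)"
    using p by (auto simp: sig_def thGf1 thHf1)
  show ?thesis unfolding tens_theta_def Let_def using disj eqs by (elim disjE) simp_all
qed

lemma th_cont: "continuous_map QT (discrete_topology {0, 1}) th"
  unfolding QT_def'
proof (rule quot_univ[OF clsY, where k = "\<lambda>x. (thG (fst x) + thH (snd x)) mod 2"])
  show "th ` (S // R) \<subseteq> topspace (discrete_topology {0, 1})"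
  proof
    fix n assume "n \<in> th ` (S // R)"
    then obtain X where X: "X \<in> S // R" "n = th X" by (rule imageE) simp
    obtain p where p: "X = cls p" "p \<in> S" using X(1) by (rule quotientE)
    have "n = (thG (fst p) + thH (snd p)) mod 2" using th_cls[OF p(2)] X(2) p(1) by simp
    then have "n = 0 \<or> n = 1" by presburger
    then show "n \<in> topspace (discrete_topology {0, 1})" by simp
  qed
  have d: "dopen T (\<lambda>z. (thG (fst z) = 1) \<noteq> (thH (snd z) = 1))"
    by (intro dopen_xor dopen_comp[OF continuous_map_fst dG] dopen_comp[OF continuous_map_snd dH])
  have c: "continuous_map T (discrete_topology {0, 1}) (\<lambda>z. if (thG (fst z) = 1) \<noteq> (thH (snd z) = 1) then 1 else (0::nat))"
    by (rule cont_if[OF d]) simp_all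
  have e: "(if (thG (fst x) = 1) \<noteq> (thH (snd x) = 1) then 1 else 0) = (thG (fst x) + thH (snd x)) mod 2"
    if x: "x \<in> topspace T" for x
  proof -
    have a: "fst x \<in> carrier G" "snd x \<in> carrier H" using x by (simp_all add: tsG tsH mem_Times_iff)
    have "thG (fst x) = 0 \<or> thG (fst x) = 1" "thH (snd x) = 0 \<or> thH (snd x) = 1"
      using thG01[OF a(1)] thH01[OF a(2)] .
    then show ?thesis by (elim disjE) simp_all
  qed
  show "continuous_map T (discrete_topology {0, 1}) (\<lambda>x. (thG (fst x) + thH (snd x)) mod 2)"
    by (rule continuous_map_eq[OF c e])
  fix x assume "x \<in> topspace T"
  then have "x \<in> S" by (simp add: tsG tsH mem_Times_iff)
  then show "th (cls x) = (thG (fst x) + thH (snd x)) mod 2" by (rule th_cls)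
qed

end



context fg2
begin

lemma tc: "tens_class G H fG fH a b = cls (a, b)" by (simp add: tens_class_def)

lemma final:
  "(\<forall>p1\<in>carrier G \<times> carrier H. \<forall>p1'\<in>carrier G \<times> carrier H.
           \<forall>p2\<in>carrier G \<times> carrier H. \<forall>p2'\<in>carrier G \<times> carrier H.
             tens_class G H fG fH (fst p1) (snd p1) = tens_class G H fG fH (fst p1') (snd p1') \<longrightarrow>
             tens_class G H fG fH (fst p2) (snd p2) = tens_class G H fG fH (fst p2') (snd p2') \<longrightarrow>
             tens_rel G H fG fH `` {tens_pmult G H fG thG thH p1 p2}
               = tens_rel G H fG fH `` {tens_pmult G H fG thG thH p1' p2'})
       \<and> tens_class G H fG fH \<one>\<^bsub>G\<^esub> fH = tens_class G H fG fH fG \<one>\<^bsub>H\<^esub>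
       \<and> fermionic_group (tens_group G H fG fH thG thH) (tens_topology G H fG fH TG TH)
           (tens_class G H fG fH \<one>\<^bsub>G\<^esub> fH) (tens_theta thG thH)"
proof (intro conjI)
  show "\<forall>p1\<in>S. \<forall>p1'\<in>S. \<forall>p2\<in>S. \<forall>p2'\<in>S.
             tens_class G H fG fH (fst p1) (snd p1) = tens_class G H fG fH (fst p1') (snd p1') \<longrightarrow>
             tens_class G H fG fH (fst p2) (snd p2) = tens_class G H fG fH (fst p2') (snd p2') \<longrightarrow>
             cls (pm p1 p2) = cls (pm p1' p2')"
  proof (intro ballI impI)
    fix p1 p1' p2 p2' assume S: "p1 \<in> S" "p1' \<in> S" "p2 \<in> S" "p2' \<in> S"
      and h1: "tens_class G H fG fH (fst p1) (snd p1) = tens_class G H fG fH (fst p1') (snd p1')"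
      and h2: "tens_class G H fG fH (fst p2) (snd p2) = tens_class G H fG fH (fst p2') (snd p2')"
    have e1: "cls p1 = cls p1'" using h1 unfolding tc by simp
    have e2: "cls p2 = cls p2'" using h2 unfolding tc by simp
    show "cls (pm p1 p2) = cls (pm p1' p2')" by (rule cls_pm_wd[OF S(1,2,3,4) e1 e2])
  qed
next
  have "sig (\<one>\<^bsub>G\<^esub>, fH) = (fG, \<one>\<^bsub>H\<^esub>)" by (simp add: sig_def fG fH fH2)
  then show "tens_class G H fG fH \<one>\<^bsub>G\<^esub> fH = tens_class G H fG fH fG \<one>\<^bsub>H\<^esub>"
    unfolding tc using cls_sig[of "(\<one>\<^bsub>G\<^esub>, fH)"] fH by simp
next
  have fS: "(\<one>\<^bsub>G\<^esub>, fH) \<in> S" using fH by simp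
  show "fermionic_group Q QT (tens_class G H fG fH \<one>\<^bsub>G\<^esub> fH) th"
    unfolding fermionic_group_def topological_group_def tc
  proof (intro conjI ballI)
    show "group Q" by (rule grpQ)
    show "topspace QT = carrier Q" by (rule tsQT)
    show "continuous_map (prod_topology QT QT) QT (\<lambda>(x, y). x \<otimes>\<^bsub>Q\<^esub> y)" by (rule multQ_cont)
    show "continuous_map QT QT (\<lambda>x. inv\<^bsub>Q\<^esub> x)" by (rule invQ_cont)
    show "cls (\<one>\<^bsub>G\<^esub>, fH) \<in> carrier Q" by (rule cls_carQ[OF fS])
    show "continuous_map QT (discrete_topology {0, 1}) th" by (rule th_cont)
    show "th (cls (\<one>\<^bsub>G\<^esub>, fH)) = 0" using th_cls[OF fS] by (simp add: thG1 thHf)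
    show "cls (\<one>\<^bsub>G\<^esub>, fH) \<otimes>\<^bsub>Q\<^esub> cls (\<one>\<^bsub>G\<^esub>, fH) = \<one>\<^bsub>Q\<^esub>"
      using fH by (simp add: mult_cls[OF fS fS] pm_eq one_Q thHf fH2)
  next
    fix X assume "X \<in> carrier Q"
    then obtain p where p: "X = cls p" "p \<in> S" by (rule carQE)
    have a: "fst p \<in> carrier G" "snd p \<in> carrier H" using p(2) by (simp_all add: mem_Times_iff)
    have l: "pm (\<one>\<^bsub>G\<^esub>, fH) p = (fst p, fH \<otimes>\<^bsub>H\<^esub> snd p)"
      using a fH by (simp add: pm_eq[OF fS p(2)] thHf)
    have r: "pm p (\<one>\<^bsub>G\<^esub>, fH) = (fst p, snd p \<otimes>\<^bsub>H\<^esub> fH)"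
      using a fH by (simp add: pm_eq[OF p(2) fS] thG1)
    show "cls (\<one>\<^bsub>G\<^esub>, fH) \<otimes>\<^bsub>Q\<^esub> X = X \<otimes>\<^bsub>Q\<^esub> cls (\<one>\<^bsub>G\<^esub>, fH)"
      unfolding p(1) mult_cls[OF fS p(2)] mult_cls[OF p(2) fS] l r using fHc[OF a(2)] by simp
    have "th X = (thG (fst p) + thH (snd p)) mod 2" using th_cls[OF p(2)] p(1) by simp
    then show "th X \<in> {0, 1}" by (simp add: mod2_eq_if)
  next
    fix X Y assume XY: "X \<in> carrier Q" "Y \<in> carrier Q"
    obtain p where p: "X = cls p" "p \<in> S" using XY(1) by (rule carQE)
    obtain q where q: "Y = cls q" "q \<in> S" using XY(2) by (rule carQE)
    have a: "fst p \<in> carrier G" "snd p \<in> carrier H" using p(2) by (simp_all add: mem_Times_iff)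
    have b: "fst q \<in> carrier G" "snd q \<in> carrier H" using q(2) by (simp_all add: mem_Times_iff)
    have "th (X \<otimes>\<^bsub>Q\<^esub> Y) = th (cls (pm p q))" unfolding p(1) q(1) mult_cls[OF p(2) q(2)] ..
    also have "\<dots> = (thG (fst (pm p q)) + thH (snd (pm p q))) mod 2"
      by (rule th_cls[OF pm_closed[OF p(2) q(2)]])
    also have "thG (fst (pm p q)) = (thG (fst p) + thG (fst q)) mod 2"
      using a b by (simp add: pm_eq[OF p(2) q(2)] G.m_assoc thGsg[OF G.m_closed[OF a(1) b(1)]] thGm[OF a(1) b(1)])
    also have "thH (snd (pm p q)) = (thH (snd p) + thH (snd q)) mod 2"
      using a b by (simp add: pm_eq[OF p(2) q(2)] thHm)
    also have "((thG (fst p) + thG (fst q)) mod 2 + (thH (snd p) + thH (snd q)) mod 2) mod 2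
       = ((thG (fst p) + thH (snd p)) mod 2 + (thG (fst q) + thH (snd q)) mod 2) mod 2"
      by (simp add: mod_add_eq add_ac)
    also have "\<dots> = (th X + th Y) mod 2" using th_cls[OF p(2)] th_cls[OF q(2)] p(1) q(1) by simp
    finally show "th (X \<otimes>\<^bsub>Q\<^esub> Y) = (th X + th Y) mod 2" .
  qed
qed

end

theorem mainTheorem3:
  fixes G :: "'a monoid" and H :: "'b monoid"
  assumes "fermionic_group G TG fG \<theta>G"
      and "fermionic_group H TH fH \<theta>H"
  shows "(\<forall>p1\<in>carrier G \<times> carrier H. \<forall>p1'\<in>carrier G \<times> carrier H.
           \<forall>p2\<in>carrier G \<times> carrier H. \<forall>p2'\<in>carrier G \<times> carrier H.
             tens_class G H fG fH (fst p1) (snd p1) = tens_class G H fG fH (fst p1') (snd p1') \<longrightarrow>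
             tens_class G H fG fH (fst p2) (snd p2) = tens_class G H fG fH (fst p2') (snd p2') \<longrightarrow>
             tens_rel G H fG fH `` {tens_pmult G H fG \<theta>G \<theta>H p1 p2}
               = tens_rel G H fG fH `` {tens_pmult G H fG \<theta>G \<theta>H p1' p2'})
       \<and> tens_class G H fG fH \<one>\<^bsub>G\<^esub> fH = tens_class G H fG fH fG \<one>\<^bsub>H\<^esub>
       \<and> fermionic_group (tens_group G H fG fH \<theta>G \<theta>H) (tens_topology G H fG fH TG TH)
           (tens_class G H fG fH \<one>\<^bsub>G\<^esub> fH) (tens_theta \<theta>G \<theta>H)"
  by (rule fg2.final[OF fg2.intro[OF assms]])


end
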